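(* Let $n\ge 3$, $n\neq 4$, and let $\Gamma$ be the graph with vertex set $\{u_i,v_i: i\in\mathbb Z_n\}$ in which $u_i$ and $v_i$ both have neighbourhood $\{u_{i-1},u_{i+1},v_{i-1},v_{i+1}\}$ (this is the Rose Window graph $R_n(2,1)$ with $u_i=x_i$, $v_i=y_{i-1}$). For $i\in\mathbb Z_n$ let $\sigma_i$ be the automorphism interchanging $u_i$ and $v_i$ and fixing all other vertices, and let $N=\langle\sigma_0,\ldots,\sigma_{n-1}\rangle$; denote $\prod_{j}\sigma_j^{i_j}\in N$ ($i_j\in\{0,1\}$) by the tuple $(i_0,i_1,\ldots,i_{n-1})$. Let $\mathcal M$ be a map of class $2_{\{0,1\}}$ with underlying graph $\Gamma$ and let $T=N\cap\mathrm{Aut}(\mathcal M)$. Then either $T=\{(0,0,\ldots,0),(0,1,1,0,1,1,\ldots,0,1,1),(1,0,1,1,0,1,\ldots,1,0,1),(1,1,0,1,1,0,\ldots,1,1,0)\}$, in which case $3\mid n$, or $T=\{(0,0,\ldots,0),(0,1,0,1,\ldots,0,1),(1,0,1,0,\ldots,1,0),(1,1,\ldots,1)\}$, in which case $2\mid n$. In particular, $\gcd(n,6)\neq 1$.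
   Context: A map is a $2$-cell embedding of a connected simple graph (its underlying graph) in a closed surface; the components of the complement are the faces. All maps considered are polytopal: flags correspond bijectively to incident triples (vertex, edge, face). For a flag $\Phi$ and $i\in\{0,1,2\}$, $\Phi^i$ is the unique flag differing from $\Phi$ exactly in its vertex ($i=0$), edge ($i=1$) or face ($i=2$). $\mathrm{Aut}(\mathcal M)$ is the group of automorphisms of the underlying graph preserving the set of faces, acting on flags. A map is in class $2_{\{0,1\}}$ if $\mathrm{Aut}(\mathcal M)$ has exactly two orbits on flags and for every flag $\Phi$, the flags $\Phi^0,\Phi^1$ lie in the orbit of $\Phi$ while $\Phi^2$ does not. *)

theory Defs
  imports Main
begin

definition simple_graph :: "'v set \<Rightarrow> 'v set set \<Rightarrow> bool" where
  "simple_graph V E \<longleftrightarrow> finite V \<and>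
     (\<forall>e\<in>E. \<exists>x y. x \<noteq> y \<and> x \<in> V \<and> y \<in> V \<and> e = {x, y})"

definition connected_graph :: "'v set \<Rightarrow> 'v set set \<Rightarrow> bool" where
  "connected_graph V E \<longleftrightarrow> V \<noteq> {} \<and>
     (\<forall>A. A \<subseteq> V \<and> A \<noteq> {} \<and> (\<forall>e\<in>E. \<forall>x\<in>e. \<forall>y\<in>e. x \<in> A \<longrightarrow> y \<in> A) \<longrightarrow> A = V)"

definition is_cycle_edges :: "'v set set \<Rightarrow> 'v set set \<Rightarrow> bool" where
  "is_cycle_edges E C \<longleftrightarrow> C \<subseteq> E \<and> finite C \<and> C \<noteq> {} \<and>
     (\<forall>x\<in>\<Union>C. card {e\<in>C. x \<in> e} = 2) \<and>
     (\<forall>D. D \<subseteq> C \<and> D \<noteq> {} \<and> (\<forall>e\<in>D. \<forall>e'\<in>C. e \<inter> e' \<noteq> {} \<longrightarrow> e' \<in> D) \<longrightarrow> D = C)"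

(* A polytopal map with underlying graph (V,E), described combinatorially by its set F
   of faces, each face given by the edge set of its boundary cycle.  Closed-surface
   conditions: every edge lies in exactly two faces, and the faces around each vertex
   form a single cycle (connected vertex link). *)
definition polytopal_map :: "'v set \<Rightarrow> 'v set set \<Rightarrow> 'v set set set \<Rightarrow> bool" where
  "polytopal_map V E F \<longleftrightarrow> simple_graph V E \<and> connected_graph V E \<and>
     (\<forall>f\<in>F. is_cycle_edges E f) \<and>
     (\<forall>e\<in>E. card {f\<in>F. e \<in> f} = 2) \<and>
     (\<forall>v\<in>V. \<forall>A. A \<subseteq> {e\<in>E. v \<in> e} \<and> A \<noteq> {} \<and>
        (\<forall>e\<in>A. \<forall>e'\<in>{e\<in>E. v \<in> e}. (\<exists>f\<in>F. e \<in> f \<and> e' \<in> f) \<longrightarrow> e' \<in> A)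
        \<longrightarrow> A = {e\<in>E. v \<in> e})"

type_synonym 'v flag = "'v \<times> 'v set \<times> 'v set set"

definition flags :: "'v set set set \<Rightarrow> 'v flag set" where
  "flags F = {(v, e, f). f \<in> F \<and> e \<in> f \<and> v \<in> e}"

definition flag0 :: "'v set set set \<Rightarrow> 'v flag \<Rightarrow> 'v flag" where
  "flag0 F \<Phi> = (THE \<Psi>. \<Psi> \<in> flags F \<and> fst \<Psi> \<noteq> fst \<Phi> \<and> snd \<Psi> = snd \<Phi>)"

definition flag1 :: "'v set set set \<Rightarrow> 'v flag \<Rightarrow> 'v flag" where
  "flag1 F \<Phi> = (THE \<Psi>. \<Psi> \<in> flags F \<and> fst \<Psi> = fst \<Phi> \<and>
      fst (snd \<Psi>) \<noteq> fst (snd \<Phi>) \<and> snd (snd \<Psi>) = snd (snd \<Phi>))"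

definition flag2 :: "'v set set set \<Rightarrow> 'v flag \<Rightarrow> 'v flag" where
  "flag2 F \<Phi> = (THE \<Psi>. \<Psi> \<in> flags F \<and> fst \<Psi> = fst \<Phi> \<and>
      fst (snd \<Psi>) = fst (snd \<Phi>) \<and> snd (snd \<Psi>) \<noteq> snd (snd \<Phi>))"

definition map_aut :: "'v set \<Rightarrow> 'v set set \<Rightarrow> 'v set set set \<Rightarrow> ('v \<Rightarrow> 'v) set" where
  "map_aut V E F = {g. bij_betw g V V \<and> (\<forall>x. x \<notin> V \<longrightarrow> g x = x) \<and>
      (\<lambda>e. g ` e) ` E = E \<and> (\<lambda>f. (\<lambda>e. g ` e) ` f) ` F = F}"

definition flag_act :: "('v \<Rightarrow> 'v) \<Rightarrow> 'v flag \<Rightarrow> 'v flag" where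
  "flag_act g \<Phi> = (case \<Phi> of (v, e, f) \<Rightarrow> (g v, g ` e, (\<lambda>e'. g ` e') ` f))"

definition flag_orbit :: "'v set \<Rightarrow> 'v set set \<Rightarrow> 'v set set set \<Rightarrow> 'v flag \<Rightarrow> 'v flag set" where
  "flag_orbit V E F \<Phi> = {flag_act g \<Phi> | g. g \<in> map_aut V E F}"

definition class_2_01 :: "'v set \<Rightarrow> 'v set set \<Rightarrow> 'v set set set \<Rightarrow> bool" where
  "class_2_01 V E F \<longleftrightarrow>
     card (flag_orbit V E F ` flags F) = 2 \<and>
     (\<forall>\<Phi>\<in>flags F. flag0 F \<Phi> \<in> flag_orbit V E F \<Phi> \<and> flag1 F \<Phi> \<in> flag_orbit V E F \<Phi>
        \<and> flag2 F \<Phi> \<notin> flag_orbit V E F \<Phi>)"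

(* The graph Gamma: u_i = (i, False), v_i = (i, True), i in Z_n = {0..<n}. *)
definition RV :: "nat \<Rightarrow> (nat \<times> bool) set" where
  "RV n = {(i, b). i < n}"

definition RE :: "nat \<Rightarrow> (nat \<times> bool) set set" where
  "RE n = {{(i, a), (j, b)} | i j a b. i < n \<and> j = (i + 1) mod n}"

(* The element (i_0,...,i_{n-1}) of N, encoded by S = {j. i_j = 1}: product of sigma_j, j in S *)
definition flipN :: "nat \<Rightarrow> nat set \<Rightarrow> (nat \<times> bool \<Rightarrow> nat \<times> bool)" where
  "flipN n S = (\<lambda>(j, b). if j < n \<and> j \<in> S then (j, \<not> b) else (j, b))"

definition sigma :: "nat \<Rightarrow> nat \<Rightarrow> (nat \<times> bool \<Rightarrow> nat \<times> bool)" where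
  "sigma n i = flipN n {i}"

(* N = <sigma_0, ..., sigma_{n-1}> (an elementary abelian 2-group: all products of
   distinct commuting involutions sigma_j) *)
definition groupN :: "nat \<Rightarrow> (nat \<times> bool \<Rightarrow> nat \<times> bool) set" where
  "groupN n = {flipN n S | S. S \<subseteq> {..<n}}"

end

theory Submission
  imports Defs
begin

definition nx :: "nat \<Rightarrow> nat \<Rightarrow> nat" where "nx n j = (j + 1) mod n"

lemma card2_cases:
  assumes "card A = 2" "a \<in> A" "b \<in> A" "a \<noteq> b" "c \<in> A" shows "c = a \<or> c = b"
proof -
  have "\<exists>x y. A = {x, y} \<and> x \<noteq> y" using assms(1) by (simp add: card_2_iff)
  then obtain x y where "A = {x, y}" by blast
  then show ?thesis using assms(2-5) by blast
qed

lemma nx_alt: "j < n \<Longrightarrow> nx n j = (if j + 1 = n then 0 else j + 1)"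
  by (auto simp: nx_def)

lemma nx_lt: "0 < n \<Longrightarrow> nx n j < n"
  by (simp add: nx_def)

lemma nx_inj: "i < n \<Longrightarrow> j < n \<Longrightarrow> nx n i = nx n j \<Longrightarrow> i = j"
  by (auto simp: nx_alt split: if_splits)

lemma RE_iff: "e \<in> RE n \<longleftrightarrow> (\<exists>i a b. i < n \<and> e = {(i,a),(nx n i, b)})"
  by (auto simp: RE_def nx_def)

lemma RE_pair: assumes "0 < n"
  shows "{(i,a),(j,b)} \<in> RE n \<longleftrightarrow> i < n \<and> j < n \<and> (j = nx n i \<or> i = nx n j)"
proof
  assume "{(i,a),(j,b)} \<in> RE n"
  then obtain i' a' b' where "i' < n" "{(i,a),(j,b)} = {(i',a'),(nx n i', b')}"
    unfolding RE_iff by blast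
  then show "i < n \<and> j < n \<and> (j = nx n i \<or> i = nx n j)"
    using nx_lt[OF assms] by (auto simp: doubleton_eq_iff)
next
  assume h: "i < n \<and> j < n \<and> (j = nx n i \<or> i = nx n j)"
  show "{(i,a),(j,b)} \<in> RE n"
  proof (cases "j = nx n i")
    case True then show ?thesis using h unfolding RE_iff by blast
  next
    case False then have "i = nx n j" using h by blast
    then have "{(i,a),(j,b)} = {(j,b),(nx n j,a)}" by auto
    then show ?thesis using h unfolding RE_iff by blast
  qed
qed


lemma nx_mod: "nx n (a mod n) = (a + 1) mod n"
  by (simp add: nx_def mod_Suc_eq)

locale rw =
  fixes n :: nat and F :: "(nat \<times> bool) set set set"
  assumes n3: "n \<ge> 3" and n4: "n \<noteq> 4"
    and pm: "polytopal_map (RV n) (RE n) F"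
    and cl: "class_2_01 (RV n) (RE n) F"
begin

abbreviation "V \<equiv> RV n"
abbreviation "E \<equiv> RE n"
abbreviation "G \<equiv> map_aut (RV n) (RE n) F"

definition act :: "(nat \<times> bool \<Rightarrow> nat \<times> bool) \<Rightarrow> (nat \<times> bool) set set \<Rightarrow> (nat \<times> bool) set set"
  where "act g f = (\<lambda>e. g ` e) ` f"

lemma n0: "0 < n" using n3 by simp

lemma V_iff: "x \<in> V \<longleftrightarrow> fst x < n" by (cases x) (auto simp: RV_def)

lemma E_sub: "e \<in> E \<Longrightarrow> e \<subseteq> V"
  using nx_lt[OF n0] by (auto simp: RE_iff V_iff)

lemma face_sub: "f \<in> F \<Longrightarrow> f \<subseteq> E"
  using pm by (auto simp: polytopal_map_def is_cycle_edges_def)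

lemma face_card: "f \<in> F \<Longrightarrow> e \<in> f \<Longrightarrow> v \<in> e \<Longrightarrow> card {e\<in>f. v \<in> e} = 2"
proof -
  assume a: "f \<in> F" "e \<in> f" "v \<in> e"
  then have "is_cycle_edges E f" using pm by (auto simp: polytopal_map_def)
  moreover have "v \<in> \<Union>f" using a by blast
  ultimately show ?thesis unfolding is_cycle_edges_def by blast
qed

lemma edge_faces: "e \<in> E \<Longrightarrow> card {f\<in>F. e \<in> f} = 2"
  using pm by (auto simp: polytopal_map_def)

lemma vertex_cond:
  assumes "v \<in> V" "A \<subseteq> {e\<in>E. v \<in> e}" "A \<noteq> {}"
    and "\<And>e e' f. e \<in> A \<Longrightarrow> e' \<in> E \<Longrightarrow> v \<in> e' \<Longrightarrow> f \<in> F \<Longrightarrow> e \<in> f \<Longrightarrow> e' \<in> f \<Longrightarrow> e' \<in> A"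
  shows "A = {e\<in>E. v \<in> e}"
proof -
  have H: "\<forall>v\<in>V. \<forall>A. A \<subseteq> {e\<in>E. v \<in> e} \<and> A \<noteq> {} \<and>
        (\<forall>e\<in>A. \<forall>e'\<in>{e\<in>E. v \<in> e}. (\<exists>f\<in>F. e \<in> f \<and> e' \<in> f) \<longrightarrow> e' \<in> A)
        \<longrightarrow> A = {e\<in>E. v \<in> e}" using pm unfolding polytopal_map_def by (elim conjE) assumption
  note H2 = spec[OF bspec[OF H assms(1)], of A]
  have "\<forall>e\<in>A. \<forall>e'\<in>{e\<in>E. v \<in> e}. (\<exists>f\<in>F. e \<in> f \<and> e' \<in> f) \<longrightarrow> e' \<in> A"
    using assms(4) by blast
  then show ?thesis using H2 assms(2,3) by blast
qed

lemma flag_act_simp: "flag_act g (v,e,f) = (g v, g ` e, act g f)"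
  by (simp add: flag_act_def act_def)

lemma flagsI: "f \<in> F \<Longrightarrow> e \<in> f \<Longrightarrow> v \<in> e \<Longrightarrow> (v,e,f) \<in> flags F"
  by (simp add: flags_def)

lemma cls:
  assumes "(v,e,f) \<in> flags F"
  shows "flag0 F (v,e,f) \<in> flag_orbit V E F (v,e,f)" "flag1 F (v,e,f) \<in> flag_orbit V E F (v,e,f)"
    "flag2 F (v,e,f) \<notin> flag_orbit V E F (v,e,f)"
proof -
  have H: "\<forall>\<Phi>\<in>flags F. flag0 F \<Phi> \<in> flag_orbit V E F \<Phi> \<and> flag1 F \<Phi> \<in> flag_orbit V E F \<Phi>
        \<and> flag2 F \<Phi> \<notin> flag_orbit V E F \<Phi>" using cl unfolding class_2_01_def by (elim conjE) assumption
  note H2 = bspec[OF H assms]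
  show "flag0 F (v,e,f) \<in> flag_orbit V E F (v,e,f)" using H2 by (elim conjE)
  show "flag1 F (v,e,f) \<in> flag_orbit V E F (v,e,f)" using H2 by (elim conjE)
  show "flag2 F (v,e,f) \<notin> flag_orbit V E F (v,e,f)" using H2 by (elim conjE)
qed

lemma orbitI: "g \<in> G \<Longrightarrow> flag_act g \<Phi> \<in> flag_orbit V E F \<Phi>"
  by (auto simp: flag_orbit_def)

lemma orbitD: "\<Psi> \<in> flag_orbit V E F \<Phi> \<Longrightarrow> \<exists>g\<in>G. flag_act g \<Phi> = \<Psi>"
  by (auto simp: flag_orbit_def)

lemma flag2_eq:
  assumes "f \<in> F" "e \<in> f" "v \<in> e" "f' \<in> F" "e \<in> f'" "f' \<noteq> f"
  shows "flag2 F (v,e,f) = (v,e,f')"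
  unfolding flag2_def
proof (rule the_equality)
  show "(v,e,f') \<in> flags F \<and> fst (v,e,f') = fst (v,e,f) \<and> fst (snd (v,e,f')) = fst (snd (v,e,f))
      \<and> snd (snd (v,e,f')) \<noteq> snd (snd (v,e,f))" using assms by (simp add: flags_def)
next
  fix \<Psi> :: "(nat \<times> bool) flag"
  assume h: "\<Psi> \<in> flags F \<and> fst \<Psi> = fst (v,e,f) \<and> fst (snd \<Psi>) = fst (snd (v,e,f))
      \<and> snd (snd \<Psi>) \<noteq> snd (snd (v,e,f))"
  obtain a b c where P: "\<Psi> = (a,b,c)" by (cases \<Psi>)
  have "a = v" "b = e" "c \<in> F" "e \<in> c" "c \<noteq> f" using h P by (auto simp: flags_def)
  have eE: "e \<in> E" using assms face_sub by blast
  have "c = f \<or> c = f'"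
    using card2_cases[OF edge_faces[OF eE], of f f' c] assms \<open>c \<in> F\<close> \<open>e \<in> c\<close> by auto
  then show "\<Psi> = (v,e,f')" using P \<open>a = v\<close> \<open>b = e\<close> \<open>c \<noteq> f\<close> by auto
qed

lemma flag1_eq:
  assumes "f \<in> F" "e \<in> f" "v \<in> e" "e' \<in> f" "v \<in> e'" "e' \<noteq> e"
  shows "flag1 F (v,e,f) = (v,e',f)"
  unfolding flag1_def
proof (rule the_equality)
  show "(v,e',f) \<in> flags F \<and> fst (v,e',f) = fst (v,e,f) \<and> fst (snd (v,e',f)) \<noteq> fst (snd (v,e,f))
      \<and> snd (snd (v,e',f)) = snd (snd (v,e,f))" using assms by (simp add: flags_def)
next
  fix \<Psi> :: "(nat \<times> bool) flag"
  assume h: "\<Psi> \<in> flags F \<and> fst \<Psi> = fst (v,e,f) \<and> fst (snd \<Psi>) \<noteq> fst (snd (v,e,f))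
      \<and> snd (snd \<Psi>) = snd (snd (v,e,f))"
  obtain a b c where P: "\<Psi> = (a,b,c)" by (cases \<Psi>)
  have "a = v" "c = f" "b \<in> f" "v \<in> b" "b \<noteq> e" using h P by (auto simp: flags_def)
  have "b = e \<or> b = e'"
    using card2_cases[OF face_card[OF assms(1-3)], of e e' b] assms \<open>b \<in> f\<close> \<open>v \<in> b\<close> by auto
  then show "\<Psi> = (v,e',f)" using P \<open>a = v\<close> \<open>c = f\<close> \<open>b \<noteq> e\<close> by auto
qed

lemma flag0_eq:
  assumes "f \<in> F" "e \<in> f" "e = {v, w}" "v \<noteq> w"
  shows "flag0 F (v,e,f) = (w,e,f)"
  unfolding flag0_def
proof (rule the_equality)
  show "(w,e,f) \<in> flags F \<and> fst (w,e,f) \<noteq> fst (v,e,f) \<and> snd (w,e,f) = snd (v,e,f)"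
    using assms by (simp add: flags_def)
next
  fix \<Psi> :: "(nat \<times> bool) flag"
  assume h: "\<Psi> \<in> flags F \<and> fst \<Psi> \<noteq> fst (v,e,f) \<and> snd \<Psi> = snd (v,e,f)"
  obtain a b c where P: "\<Psi> = (a,b,c)" by (cases \<Psi>)
  have "a \<noteq> v" "b = e" "c = f" "a \<in> b" using h P by (auto simp: flags_def)
  then show "\<Psi> = (w,e,f)" using P assms(3) by auto
qed

lemma G_bij: "g \<in> G \<Longrightarrow> bij_betw g V V" by (simp add: map_aut_def)
lemma G_out: "g \<in> G \<Longrightarrow> x \<notin> V \<Longrightarrow> g x = x"
  unfolding map_aut_def mem_Collect_eq by (elim conjE) blast
lemma G_Eimg: "g \<in> G \<Longrightarrow> (\<lambda>e. g ` e) ` E = E" by (simp add: map_aut_def)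
lemma G_Fimg: "g \<in> G \<Longrightarrow> act g ` F = F" by (simp add: map_aut_def act_def)

lemma G_V: "g \<in> G \<Longrightarrow> x \<in> V \<Longrightarrow> g x \<in> V"
  using G_bij bij_betwE by blast
lemma G_inj: "g \<in> G \<Longrightarrow> x \<in> V \<Longrightarrow> y \<in> V \<Longrightarrow> g x = g y \<Longrightarrow> x = y"
  using G_bij bij_betw_imp_inj_on inj_onD by metis
lemma G_surj: "g \<in> G \<Longrightarrow> y \<in> V \<Longrightarrow> \<exists>x\<in>V. g x = y"
  using G_bij bij_betw_imp_surj_on by (metis imageE)
lemma G_E: "g \<in> G \<Longrightarrow> e \<in> E \<Longrightarrow> g ` e \<in> E"
  using G_Eimg by blast
lemma G_F: "g \<in> G \<Longrightarrow> f \<in> F \<Longrightarrow> act g f \<in> F"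
  using G_Fimg by blast
lemma G_injE: "g \<in> G \<Longrightarrow> e \<in> E \<Longrightarrow> e' \<in> E \<Longrightarrow> g ` e = g ` e' \<Longrightarrow> e = e'"
proof -
  assume a: "g \<in> G" "e \<in> E" "e' \<in> E" "g ` e = g ` e'"
  have "inj_on g V" using G_bij[OF a(1)] bij_betw_imp_inj_on by blast
  then show "e = e'" using inj_on_image_eq_iff[of g V e e'] E_sub a by blast
qed

lemma id_G: "id \<in> G"
  by (simp add: map_aut_def)

lemma comp_G: assumes "g \<in> G" "h \<in> G" shows "g \<circ> h \<in> G"
proof -
  have "bij_betw (g \<circ> h) V V" using G_bij assms bij_betw_trans by blast
  moreover have "\<forall>x. x \<notin> V \<longrightarrow> (g \<circ> h) x = x"
  proof (intro allI impI)
    fix x assume "x \<notin> V" then show "(g \<circ> h) x = x" using G_out[OF assms(1)] G_out[OF assms(2)] by simp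
  qed
  moreover have "(\<lambda>e. (g \<circ> h) ` e) ` E = E"
  proof -
    have "(\<lambda>e. (g \<circ> h) ` e) ` E = (\<lambda>e. g ` e) ` ((\<lambda>e. h ` e) ` E)" by (auto simp: image_comp)
    then show ?thesis using G_Eimg assms by simp
  qed
  moreover have "(\<lambda>f. (\<lambda>e. (g \<circ> h) ` e) ` f) ` F = F"
  proof -
    have "(\<lambda>f. (\<lambda>e. (g \<circ> h) ` e) ` f) ` F = act g ` (act h ` F)" by (auto simp: image_comp act_def)
    then show ?thesis using G_Fimg assms by simp
  qed
  ultimately show ?thesis unfolding map_aut_def mem_Collect_eq by blast
qed

lemma G_adj: assumes "g \<in> G" "x \<in> V" "z \<in> V" shows "{g x, g z} \<in> E \<longleftrightarrow> {x, z} \<in> E"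
proof
  assume "{x, z} \<in> E" then show "{g x, g z} \<in> E" using G_E[OF assms(1)] by force
next
  assume h: "{g x, g z} \<in> E"
  then obtain e where e: "e \<in> E" "g ` e = {g x, g z}" using G_Eimg[OF assms(1)] by (metis imageE)
  have "e \<subseteq> V" using E_sub e by blast
  have "e = {x, z}"
  proof -
    have "inj_on g V" using G_bij[OF assms(1)] bij_betw_imp_inj_on by blast
    moreover have "g ` e = g ` {x, z}" using e by simp
    ultimately show ?thesis using inj_on_image_eq_iff[of g V e "{x,z}"] \<open>e \<subseteq> V\<close> assms by blast
  qed
  then show "{x, z} \<in> E" using e by simp
qed


lemma KL:
  assumes g: "g \<in> G" and e: "e \<in> E" "v \<in> e" and gv: "g v = v" and ge: "g ` e = e"
  shows "\<forall>e'\<in>E. v \<in> e' \<longrightarrow> g ` e' = e'"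
proof -
  have vV: "v \<in> V" using E_sub e by blast
  let ?A = "{e'\<in>E. v \<in> e' \<and> g ` e' = e'}"
  have "?A = {e'\<in>E. v \<in> e'}"
  proof (rule vertex_cond[OF vV])
    show "?A \<subseteq> {e\<in>E. v\<in>e}" by blast
    show "?A \<noteq> {}" using e ge by blast
    fix e1 e2 f assume h: "e1 \<in> ?A" "e2 \<in> E" "v \<in> e2" "f \<in> F" "e1 \<in> f" "e2 \<in> f"
    have ge1: "g ` e1 = e1" "v \<in> e1" "e1 \<in> E" using h(1) by auto
    have gf: "act g f = f"
    proof (rule ccontr)
      assume ne: "act g f \<noteq> f"
      have "act g f \<in> F" using G_F g h by blast
      moreover have "e1 \<in> act g f" using h(5) ge1 unfolding act_def by (metis imageI)
      ultimately have "flag2 F (v,e1,f) = (v,e1,act g f)"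
        using flag2_eq[of f e1 v "act g f"] h ne ge1 by auto
      moreover have "flag_act g (v,e1,f) = (v, e1, act g f)" using ge1 gv by (simp add: flag_act_simp)
      ultimately have "flag2 F (v,e1,f) \<in> flag_orbit V E F (v,e1,f)" using orbitI[OF g] by metis
      with cls(3)[OF flagsI[OF h(4,5) ge1(2)]] show False by blast
    qed
    have "g ` e2 \<in> act g f" using h(6) unfolding act_def by blast
    then have ge2f: "g ` e2 \<in> f" using gf by simp
    have vge2: "v \<in> g ` e2" using h(3) gv by (metis imageI)
    show "e2 \<in> ?A"
    proof (cases "e2 = e1")
      case True thus ?thesis using h ge1 by simp
    next
      case False
      have "g ` e2 \<noteq> e1"
      proof
        assume "g ` e2 = e1"
        then have "g ` e2 = g ` e1" using ge1 by simp
        then show False using G_injE[OF g h(2) ge1(3)] False by blast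
      qed
      then have "g ` e2 = e2"
        using card2_cases[OF face_card[OF h(4,5) ge1(2)], of e1 e2 "g ` e2"] h ge1 ge2f vge2 False
        by auto
      then show ?thesis using h by simp
    qed
  qed
  then show ?thesis by blast
qed

lemma adjV: "{x, z} \<in> E \<longleftrightarrow> fst x < n \<and> fst z < n \<and> (fst z = nx n (fst x) \<or> fst x = nx n (fst z))"
  using RE_pair[OF n0, of "fst x" "snd x" "fst z" "snd z"] by simp


lemma pred_ex: "i < n \<Longrightarrow> \<exists>p<n. nx n p = i"
proof -
  assume i: "i < n"
  show ?thesis
  proof (cases "i = 0")
    case True then show ?thesis using n3 by (intro exI[of _ "n - 1"]) (auto simp: nx_def)
  next
    case False then show ?thesis using i by (intro exI[of _ "i - 1"]) (auto simp: nx_def)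
  qed
qed

lemma nx4: "nx n (nx n (nx n (nx n i))) = (i + 4) mod n"
proof -
  have "i + 4 = Suc (Suc (Suc (Suc i)))" by simp
  then show ?thesis by (simp only: nx_def mod_Suc_eq Suc_eq_plus1[symmetric])
qed

lemma nbr_eq_block:
  assumes x: "x \<in> V" and y: "y \<in> V" and N: "\<forall>z\<in>V. {x,z}\<in>E \<longleftrightarrow> {y,z}\<in>E"
  shows "fst x = fst y"
proof (rule ccontr)
  assume ne: "fst x \<noteq> fst y"
  define i where "i = fst x"
  define j where "j = fst y"
  have i: "i < n" and j: "j < n" using x y V_iff i_def j_def by auto
  have z1: "(nx n i, False) \<in> V" using nx_lt[OF n0] V_iff by simp
  have "{x, (nx n i, False)} \<in> E" using adjV i i_def nx_lt[OF n0] by simp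
  then have "{y, (nx n i, False)} \<in> E" using N z1 by blast
  then have "nx n i = nx n j \<or> j = nx n (nx n i)" using adjV j_def by simp
  then have j2: "j = nx n (nx n i)" using nx_inj[OF i j] ne i_def j_def by blast
  obtain p where p: "p < n" "nx n p = i" using pred_ex[OF i] by blast
  have z2: "(p, False) \<in> V" using p V_iff by simp
  have "{x, (p, False)} \<in> E" using adjV i i_def p by simp
  then have "{y, (p, False)} \<in> E" using N z2 by blast
  then have "p = nx n j \<or> j = nx n p" using adjV j_def by simp
  then have "p = nx n j" using p ne i_def j_def by auto
  then have "(i + 4) mod n = i" using nx4 p j2 by metis
  then have "(i + 4) mod n = i mod n" using i by simp
  then have "n dvd (i + 4) - i" using mod_eq_dvd_iff_nat[of i "i+4" n] by simp
  then have "n dvd 4" by simp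
  then have "n \<le> 4" using dvd_imp_le by simp
  then have "n = 3 \<or> n = 4" using n3 by linarith
  then show False using n4 \<open>n dvd 4\<close> by auto
qed

definition bt :: "(nat \<times> bool \<Rightarrow> nat \<times> bool) \<Rightarrow> nat \<Rightarrow> nat" where
  "bt g j = fst (g (j, False))"

lemma bt_blk: assumes g: "g \<in> G" and j: "j < n" shows "fst (g (j, b)) = bt g j"
proof -
  have xV: "(j,b) \<in> V" "(j,False) \<in> V" using j V_iff by auto
  have N0: "\<forall>z\<in>V. {(j,b),z}\<in>E \<longleftrightarrow> {(j,False),z}\<in>E" using adjV by simp
  have "\<forall>z\<in>V. {g (j,b),z}\<in>E \<longleftrightarrow> {g (j,False),z}\<in>E"
  proof
    fix z assume "z \<in> V"
    then obtain z' where z': "z' \<in> V" "g z' = z" using G_surj[OF g] by blast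
    show "{g (j,b),z}\<in>E \<longleftrightarrow> {g (j,False),z}\<in>E"
      using G_adj[OF g xV(1) z'(1)] G_adj[OF g xV(2) z'(1)] N0 z' by auto
  qed
  then show ?thesis using nbr_eq_block[OF G_V[OF g xV(1)] G_V[OF g xV(2)]] bt_def by simp
qed

lemma bt_lt: "g \<in> G \<Longrightarrow> j < n \<Longrightarrow> bt g j < n"
  using G_V[of g "(j,False)"] V_iff bt_def by simp

lemma bt_inj: assumes g: "g \<in> G" and i: "i < n" and j: "j < n" and eq: "bt g i = bt g j"
  shows "i = j"
proof -
  have V3: "(i,False) \<in> V" "(i,True) \<in> V" "(j,False) \<in> V" using i j V_iff by auto
  have d: "g (i,False) \<noteq> g (i,True)" using G_inj[OF g V3(1,2)] by blast
  have f1: "fst (g (i,False)) = bt g i" "fst (g (i,True)) = bt g i" "fst (g (j,False)) = bt g i"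
    using bt_blk[OF g i] bt_blk[OF g j] eq by auto
  have "snd (g (i,False)) \<noteq> snd (g (i,True))" using d f1 by (metis prod.expand)
  then have "snd (g (j,False)) = snd (g (i,False)) \<or> snd (g (j,False)) = snd (g (i,True))" by auto
  then have "g (j,False) = g (i,False) \<or> g (j,False) = g (i,True)" using f1 by (metis prod.expand)
  then show ?thesis using G_inj[OF g V3(3) V3(1)] G_inj[OF g V3(3) V3(2)] by auto
qed

lemma bt_adj: assumes g: "g \<in> G" and j: "j < n"
  shows "bt g (nx n j) = nx n (bt g j) \<or> bt g j = nx n (bt g (nx n j))"
proof -
  have V2: "(j,False) \<in> V" "(nx n j,False) \<in> V" using j V_iff nx_lt[OF n0] by auto
  have "{(j,False),(nx n j,False)} \<in> E" using adjV j nx_lt[OF n0] by simp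
  then have "{g (j,False), g (nx n j,False)} \<in> E" using G_adj[OF g V2] by simp
  then show ?thesis using adjV bt_def by simp
qed

end

lemma rot:
  assumes n: "3 \<le> n" and lt: "\<forall>j<n. \<beta> j < n" and inj: "\<forall>i<n. \<forall>j<n. \<beta> i = \<beta> j \<longrightarrow> i = j"
    and adj: "\<forall>j<n. \<beta> (nx n j) = nx n (\<beta> j) \<or> \<beta> j = nx n (\<beta> (nx n j))"
    and c: "c < n" "\<beta> 0 = c" "\<beta> 1 = nx n c"
  shows "\<forall>j<n. \<beta> j = (j + c) mod n"
proof -
  have I: "j + 1 < n \<longrightarrow> \<beta> j = (j + c) mod n \<and> \<beta> (j + 1) = (j + 1 + c) mod n" for j
  proof (induction j)
    case 0 then show ?case using c by (simp add: nx_def add.commute)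
  next
    case (Suc j)
    show ?case
    proof
      assume j2: "Suc j + 1 < n"
      then have IH: "\<beta> j = (j + c) mod n" "\<beta> (j + 1) = (j + 1 + c) mod n" using Suc by auto
      have nxj: "nx n (j + 1) = j + 2" using j2 by (simp add: nx_def)
      have j1: "j + 1 < n" "j < n" "j + 2 < n" using j2 by auto
      have "\<beta> (nx n (j + 1)) = nx n (\<beta> (j + 1)) \<or> \<beta> (j + 1) = nx n (\<beta> (nx n (j + 1)))"
        using adj j1(1) by blast
      then have D: "\<beta> (j + 2) = nx n (\<beta> (j + 1)) \<or> \<beta> (j + 1) = nx n (\<beta> (j + 2))"
        unfolding nxj .
      moreover have "\<beta> (j + 1) = nx n (\<beta> (j + 2)) \<Longrightarrow> False"
      proof -
        assume h: "\<beta> (j + 1) = nx n (\<beta> (j + 2))"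
        have "nx n (\<beta> j) = \<beta> (j + 1)" using IH by (simp add: nx_mod)
        then have "nx n (\<beta> j) = nx n (\<beta> (j + 2))" using h by simp
        moreover have "\<beta> j < n" "\<beta> (j + 2) < n" using lt j1 by auto
        ultimately have "\<beta> j = \<beta> (j + 2)" using nx_inj by blast
        then have "j = j + 2" using inj j1 by blast
        then show False by simp
      qed
      ultimately have "\<beta> (j + 2) = nx n (\<beta> (j + 1))" by blast
      then have "\<beta> (j + 2) = (j + 2 + c) mod n" using IH by (simp add: nx_mod)
      then show "\<beta> (Suc j) = (Suc j + c) mod n \<and> \<beta> (Suc j + 1) = (Suc j + 1 + c) mod n"
        using IH by simp
    qed
  qed
  show ?thesis
  proof (intro allI impI)
    fix j assume j: "j < n"
    show "\<beta> j = (j + c) mod n"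
    proof (cases "j + 1 < n")
      case True then show ?thesis using I by blast
    next
      case False
      define k where "k = j - 1"
      have "j = k + 1" "k + 1 < n" using j n False k_def by auto
      then show ?thesis using I[of k] by simp
    qed
  qed
qed


lemma flipN_app: "flipN n S (j, b) = (if j < n \<and> j \<in> S then (j, \<not> b) else (j, b))"
  by (simp add: flipN_def)

lemma flipN_invol: "flipN n S (flipN n S x) = x"
  by (cases x) (simp add: flipN_app)

lemma flipN_comp: "flipN n S \<circ> flipN n S' = flipN n ((S - S') \<union> (S' - S))"
proof
  fix x show "(flipN n S \<circ> flipN n S') x = flipN n ((S - S') \<union> (S' - S)) x"
    by (cases x) (auto simp: flipN_app)
qed

lemma flipN_empty: "flipN n {} = id"
proof
  fix x show "flipN n {} x = id x" by (cases x) (simp add: flipN_app)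
qed

lemma flipN_inj: assumes "S \<subseteq> {..<n}" "S' \<subseteq> {..<n}" "flipN n S = flipN n S'" shows "S = S'"
proof -
  have "j \<in> S \<longleftrightarrow> j \<in> S'" for j
  proof -
    have "flipN n S (j, False) = flipN n S' (j, False)" using assms(3) by simp
    then show ?thesis using assms(1,2) by (auto simp: flipN_app split: if_splits)
  qed
  then show ?thesis by blast
qed

context rw
begin

lemma flip_basic:
  "bij_betw (flipN n S) V V" "\<forall>x. x \<notin> V \<longrightarrow> flipN n S x = x" "(\<lambda>e. flipN n S ` e) ` E = E"
proof -
  have fV: "x \<in> V \<Longrightarrow> flipN n S x \<in> V" for x by (cases x) (simp add: flipN_app V_iff)
  show "bij_betw (flipN n S) V V"
    by (rule bij_betw_byWitness[where f'="flipN n S"]) (auto simp: flipN_invol fV)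
  show "\<forall>x. x \<notin> V \<longrightarrow> flipN n S x = x"
  proof (intro allI impI)
    fix x assume "x \<notin> V" then show "flipN n S x = x" by (cases x) (simp add: flipN_app V_iff)
  qed
  have fE: "e \<in> E \<Longrightarrow> flipN n S ` e \<in> E" for e
  proof -
    assume "e \<in> E"
    then obtain i a b where "i < n" "e = {(i,a),(nx n i, b)}" unfolding RE_iff by blast
    then show "flipN n S ` e \<in> E"
      unfolding RE_iff by (auto simp: flipN_app intro!: exI[of _ i])
  qed
  show "(\<lambda>e. flipN n S ` e) ` E = E"
  proof
    show "(\<lambda>e. flipN n S ` e) ` E \<subseteq> E" using fE by blast
    show "E \<subseteq> (\<lambda>e. flipN n S ` e) ` E"
    proof
      fix e assume e: "e \<in> E"
      have "e = flipN n S ` (flipN n S ` e)" by (simp add: image_comp flipN_invol comp_def)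
      then show "e \<in> (\<lambda>e. flipN n S ` e) ` E" using fE[OF e] by blast
    qed
  qed
qed

definition TT :: "nat set set" where "TT = {S. S \<subseteq> {..<n} \<and> flipN n S \<in> G}"

lemma TT_empty: "{} \<in> TT"
  using id_G by (simp add: TT_def flipN_empty)

lemma TT_diff: "S \<in> TT \<Longrightarrow> S' \<in> TT \<Longrightarrow> (S - S') \<union> (S' - S) \<in> TT"
proof -
  assume a: "S \<in> TT" "S' \<in> TT"
  then have "flipN n S \<circ> flipN n S' \<in> G" using comp_G TT_def by simp
  then have "flipN n ((S - S') \<union> (S' - S)) \<in> G" by (simp add: flipN_comp)
  moreover have "(S - S') \<union> (S' - S) \<subseteq> {..<n}" using a TT_def by auto
  ultimately show ?thesis using TT_def by simp
qed

lemma prop3: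
  assumes S: "S \<in> TT" and k: "k < n" "k \<notin> S" "nx n k \<notin> S"
  shows "nx n (nx n k) \<notin> S"
proof
  assume w: "nx n (nx n k) \<in> S"
  define g where "g = flipN n S"
  have g: "g \<in> G" using S g_def TT_def by simp
  have nk: "nx n k < n" "nx n (nx n k) < n" using nx_lt[OF n0] by auto
  have e: "{(k,False),(nx n k,False)} \<in> E" using adjV k nk by simp
  have gu: "g (k,False) = (k,False)" "g (nx n k, False) = (nx n k, False)" using k g_def by (auto simp: flipN_app)
  have ge: "g ` {(k,False),(nx n k,False)} = {(k,False),(nx n k,False)}" using gu by simp
  have e': "{(nx n k,False),(nx n (nx n k),False)} \<in> E" using adjV nk by simp
  have vin: "(nx n k, False) \<in> {(k,False),(nx n k,False)}" by simp
  note K = KL[OF g e vin gu(2) ge]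
  have vin2: "(nx n k,False) \<in> {(nx n k,False),(nx n (nx n k),False)}" by simp
  have "g ` {(nx n k,False),(nx n (nx n k),False)} = {(nx n k,False),(nx n (nx n k),False)}"
    using bspec[OF K e'] vin2 by (rule mp)
  then have "g (nx n (nx n k),False) \<in> {(nx n k,False),(nx n (nx n k),False)}" by blast
  moreover have "g (nx n (nx n k),False) = (nx n (nx n k),True)" using w nk g_def by (simp add: flipN_app)
  ultimately have "nx n (nx n k) = nx n k" by auto
  then have "nx n k = k" using nx_inj[OF nk(1) k(1)] by simp
  then show False using k(1) n3 by (auto simp: nx_alt split: if_splits)
qed

lemma TT_B:
  assumes S: "S \<in> TT" and k: "k < n" "k \<notin> S" "nx n k \<notin> S"
  shows "S = {}"
proof -
  have I: "(k + m) mod n \<notin> S \<and> (k + m + 1) mod n \<notin> S" for m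
  proof (induction m)
    case 0 then show ?case using k by (simp add: nx_def)
  next
    case (Suc m)
    have "nx n ((k + m) mod n) = (k + m + 1) mod n" by (simp add: nx_mod)
    moreover have "nx n ((k + m + 1) mod n) = (k + m + 2) mod n" by (simp add: nx_mod)
    moreover have "(k + m) mod n < n" using n0 by simp
    ultimately have "(k + m + 2) mod n \<notin> S" using prop3[OF S, of "(k + m) mod n"] Suc by simp
    then show ?case using Suc by simp
  qed
  show ?thesis
  proof (rule ccontr)
    assume "S \<noteq> {}"
    then obtain x where x: "x \<in> S" by blast
    have "x < n" using x S TT_def by auto
    then have "(k + (x + n - k)) mod n = x" using k by simp
    then show False using I[of "x + n - k"] x by simp
  qed
qed


lemma nx0: "nx n 0 = 1" using n3 by (simp add: nx_def)
lemma nx_last: "nx n (n - 1) = 0" using n3 by (simp add: nx_def)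

lemma edges_at_u0:
  assumes "e \<in> E" "(0,False) \<in> e"
  shows "\<exists>b. e = {(0,False),(1,b)} \<or> e = {(0,False),(n - 1,b)}"
proof -
  obtain i a b where i: "i < n" "e = {(i,a),(nx n i, b)}" using assms(1) unfolding RE_iff by blast
  show ?thesis
  proof (cases "(i,a) = (0,False)")
    case True then show ?thesis using i nx0 by auto
  next
    case False
    then have "(nx n i, b) = (0,False)" using i assms(2) by auto
    then have "nx n i = 0" by simp
    then have "i = n - 1" using i(1) by (auto simp: nx_alt split: if_splits)
    then show ?thesis using i \<open>(nx n i, b) = (0,False)\<close> by auto
  qed
qed

lemma doubleton_img:
  assumes g: "g \<in> G" and "x \<in> V" "y \<in> V" "x \<noteq> y" "g x = x'" "g ` {x, y} = {x', z}"
  shows "g y = z"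
proof -
  have "g y \<in> {x', z}" using assms(6) by blast
  moreover have "g y \<noteq> x'" using G_inj[OF g assms(3) assms(2)] assms(4,5) by auto
  ultimately show ?thesis by blast
qed

lemma bt_comp: assumes "g \<in> G" "h \<in> G" "j < n" shows "bt (h \<circ> g) j = bt h (bt g j)"
proof -
  have "bt (h \<circ> g) j = fst (h (g (j,False)))" by (simp add: bt_def)
  also have "\<dots> = fst (h (bt g j, snd (g (j,False))))" by (metis bt_def prod.collapse)
  also have "\<dots> = bt h (bt g j)" by (rule bt_blk[OF assms(2) bt_lt[OF assms(1,3)]])
  finally show ?thesis .
qed

lemma bt_id_flip:
  assumes g: "g \<in> G" and b: "\<forall>j<n. bt g j = j"
  shows "g = flipN n {j. j < n \<and> g (j,False) = (j,True)}"
proof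
  fix x :: "nat \<times> bool"
  obtain j c where x: "x = (j,c)" by (cases x)
  show "g x = flipN n {j. j < n \<and> g (j,False) = (j,True)} x"
  proof (cases "j < n")
    case False
    then have "x \<notin> V" using x V_iff by simp
    then show ?thesis using G_out[OF g] x False by (simp add: flipN_app)
  next
    case True
    have V2: "(j,False) \<in> V" "(j,True) \<in> V" using True V_iff by auto
    have d: "g (j,False) \<noteq> g (j,True)" using G_inj[OF g V2] by blast
    have f: "g (j,False) = (j, snd (g (j,False)))" "g (j,True) = (j, snd (g (j,True)))"
      using bt_blk[OF g True, of False] bt_blk[OF g True, of True] b True by (metis prod.collapse)+
    have "snd (g (j,False)) \<noteq> snd (g (j,True))" using d f by metis
    then show ?thesis using f x True by (cases c; cases "snd (g (j,False))"; auto simp: flipN_app)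
  qed
qed

lemma TT_A: "\<exists>A\<in>TT. 0 \<notin> A \<and> 1 \<in> A \<and> n - 1 \<in> A"
proof -
  define u0 where "u0 = ((0::nat),False)"
  define u1 where "u1 = ((1::nat),False)"
  define v1 where "v1 = ((1::nat),True)"
  define e0 where "e0 = {u0,u1}"
  define e1 where "e1 = {u0,v1}"
  have VV: "u0 \<in> V" "u1 \<in> V" "v1 \<in> V" using n3 V_iff u0_def u1_def v1_def by auto
  have e0E: "e0 \<in> E" "u0 \<in> e0" using adjV e0_def u0_def u1_def nx0 n3 by auto
  have e1E: "e1 \<in> E" "u0 \<in> e1" using adjV e1_def u0_def v1_def nx0 n3 by auto
  define Orb where "Orb = {e'\<in>E. u0 \<in> e' \<and> (\<exists>g\<in>G. g u0 = u0 \<and> g ` e0 = e')}"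
  have "Orb = {e\<in>E. u0 \<in> e}"
  proof (rule vertex_cond[OF VV(1)])
    show "Orb \<subseteq> {e\<in>E. u0 \<in> e}" using Orb_def by blast
    have "e0 \<in> Orb" using Orb_def e0E id_G by force
    then show "Orb \<noteq> {}" by blast
    fix e e' f assume h: "e \<in> Orb" "e' \<in> E" "u0 \<in> e'" "f \<in> F" "e \<in> f" "e' \<in> f"
    obtain g where g: "g \<in> G" "g u0 = u0" "g ` e0 = e" using h(1) Orb_def by blast
    have ue: "u0 \<in> e" using h(1) Orb_def by blast
    show "e' \<in> Orb"
    proof (cases "e' = e")
      case True then show ?thesis using h(1) by simp
    next
      case False
      have "flag1 F (u0,e,f) = (u0,e',f)" using flag1_eq[OF h(4,5) ue h(6,3) False] .
      then have "(u0,e',f) \<in> flag_orbit V E F (u0,e,f)" using cls(2)[OF flagsI[OF h(4,5) ue]] by simp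
      then obtain k where k: "k \<in> G" "flag_act k (u0,e,f) = (u0,e',f)" using orbitD by blast
      have k2: "k u0 = u0" "k ` e = e'" using k(2) by (auto simp: flag_act_simp)
      have "(k \<circ> g) u0 = u0" "(k \<circ> g) ` e0 = e'" using g k2 by (auto simp: image_comp[symmetric])
      then show ?thesis using Orb_def comp_G[OF k(1) g(1)] h by blast
    qed
  qed
  then have "e1 \<in> Orb" using e1E by blast
  then obtain g where g: "g \<in> G" "g u0 = u0" "g ` e0 = e1" using Orb_def by blast
  have gu1: "g u1 = v1" using doubleton_img[OF g(1) VV(1,2) _ g(2)] g(3) e0_def e1_def u0_def u1_def by simp
  have "\<forall>j<n. bt g j = (j + 0) mod n"
  proof (rule rot[OF n3])
    show "\<forall>j<n. bt g j < n" using bt_lt g by blast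
    show "\<forall>i<n. \<forall>j<n. bt g i = bt g j \<longrightarrow> i = j" using bt_inj g by blast
    show "\<forall>j<n. bt g (nx n j) = nx n (bt g j) \<or> bt g j = nx n (bt g (nx n j))" using bt_adj g by blast
    show "0 < n" using n0 .
    show "bt g 0 = 0" using g(2) u0_def bt_def by simp
    show "bt g 1 = nx n 0" using gu1 u1_def v1_def bt_def nx0 by simp
  qed
  then have bid: "\<forall>j<n. bt g j = j" by simp
  define A where "A = {j. j < n \<and> g (j,False) = (j,True)}"
  have gA: "g = flipN n A" using bt_id_flip[OF g(1) bid] A_def by simp
  have ATT: "A \<in> TT" using TT_def A_def g(1) gA by auto
  have "0 \<notin> A" using A_def g(2) u0_def by simp
  moreover have "1 \<in> A" using A_def gu1 u1_def v1_def n3 by simp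
  moreover have "n - 1 \<in> A"
  proof (rule ccontr)
    assume na: "n - 1 \<notin> A"
    have gl: "g (n - 1, False) = (n - 1, False)" using gA na by (simp add: flipN_app)
    define e2 where "e2 = {(n - 1, False), u0}"
    have e2E: "e2 \<in> E" using adjV e2_def u0_def nx_last n3 by auto
    have "g ` e2 = e2" using gl g(2) e2_def by simp
    moreover have "u0 \<in> e2" using e2_def by simp
    ultimately have "\<forall>e'\<in>E. u0 \<in> e' \<longrightarrow> g ` e' = e'" using KL[OF g(1) e2E _ g(2)] by blast
    then have "g ` e0 = e0" using e0E by blast
    then have "e1 = e0" using g(3) by simp
    then show False using e0_def e1_def u0_def u1_def v1_def by (auto simp: doubleton_eq_iff)
  qed
  ultimately show ?thesis using ATT by blast
qed


lemma TT_rotg: "\<exists>g\<in>G. \<forall>j<n. bt g j = nx n j"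
proof -
  define u0 where "u0 = ((0::nat),False)"
  define e0 where "e0 = {u0,((1::nat),False)}"
  define e1 where "e1 = {u0,((1::nat),True)}"
  have u0V: "u0 \<in> V" using u0_def V_iff n3 by simp
  have e0E: "e0 \<in> E" "u0 \<in> e0" using adjV e0_def u0_def nx0 n3 by auto
  have e1E: "e1 \<in> E" "u0 \<in> e1" using adjV e1_def u0_def nx0 n3 by auto
  define e2 where "e2 = {(n - 1, False), u0}"
  have e2E: "e2 \<in> E" "u0 \<in> e2" using adjV e2_def u0_def nx_last n3 by auto
  have e2n: "e2 \<notin> {e0, e1}"
  proof
    assume "e2 \<in> {e0,e1}"
    then have "(n - 1, False) \<in> e0 \<or> (n - 1, False) \<in> e1" using e2_def by auto
    then show False using n3 e0_def e1_def u0_def by auto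
  qed
  have "\<exists>e e' f. e \<in> {e0,e1} \<and> e' \<in> E \<and> u0 \<in> e' \<and> f \<in> F \<and> e \<in> f \<and> e' \<in> f \<and> e' \<notin> {e0,e1}"
  proof (rule ccontr)
    assume nex: "\<not> ?thesis"
    have "{e0,e1} = {e\<in>E. u0 \<in> e}"
    proof (rule vertex_cond[OF u0V])
      show "{e0,e1} \<subseteq> {e\<in>E. u0 \<in> e}" using e0E e1E by blast
      show "{e0,e1} \<noteq> {}" by blast
      fix e e' f assume "e \<in> {e0,e1}" "e' \<in> E" "u0 \<in> e'" "f \<in> F" "e \<in> f" "e' \<in> f"
      then show "e' \<in> {e0,e1}" using nex by blast
    qed
    then show False using e2E e2n by blast
  qed
  then obtain e e' f where h: "e \<in> {e0,e1}" "e' \<in> E" "u0 \<in> e'" "f \<in> F" "e \<in> f" "e' \<in> f" "e' \<notin> {e0,e1}"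
    by blast
  obtain b where w: "e = {u0, (1,b)}" using h(1) e0_def e1_def by blast
  obtain b' where w': "e' = {u0, (n - 1, b')}"
  proof -
    obtain c where "e' = {(0,False),(1,c)} \<or> e' = {(0,False),(n - 1,c)}"
      using edges_at_u0[OF h(2)] h(3) u0_def by blast
    moreover have "e' \<noteq> {(0,False),(1,c)}" using h(7) e0_def e1_def u0_def by (cases c) auto
    ultimately show ?thesis using that u0_def by blast
  qed
  define w where "w = ((1::nat), b)"
  define w' where "w' = (n - 1, b')"
  have wV: "w \<in> V" "w' \<in> V" using w_def w'_def n3 V_iff by auto
  have uw: "u0 \<noteq> w" "u0 \<noteq> w'" using u0_def w_def w'_def n3 by auto
  have ue: "u0 \<in> e" using w by simp
  have ee': "e' \<noteq> e" using h(1,7) by blast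
  have "flag0 F (u0,e,f) = (w,e,f)" using flag0_eq[OF h(4,5) _ uw(1)] w w_def by simp
  then have "(w,e,f) \<in> flag_orbit V E F (u0,e,f)" using cls(1)[OF flagsI[OF h(4,5) ue]] by simp
  then obtain hh where hh: "hh \<in> G" "flag_act hh (u0,e,f) = (w,e,f)" using orbitD by blast
  have hh2: "hh u0 = w" "hh ` e = e" using hh(2) by (auto simp: flag_act_simp)
  have hhw: "hh w = u0"
    using doubleton_img[OF hh(1) u0V wV(1) uw(1) hh2(1)] hh2(2) w w_def by (simp add: insert_commute)
  have "flag1 F (u0,e,f) = (u0,e',f)" using flag1_eq[OF h(4,5) ue h(6,3) ee'] .
  then have "(u0,e',f) \<in> flag_orbit V E F (u0,e,f)" using cls(2)[OF flagsI[OF h(4,5) ue]] by simp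
  then obtain k where k: "k \<in> G" "flag_act k (u0,e,f) = (u0,e',f)" using orbitD by blast
  have k2: "k u0 = u0" "k ` e = e'" using k(2) by (auto simp: flag_act_simp)
  have kw: "k w = w'"
    using doubleton_img[OF k(1) u0V wV(1) uw(1) k2(1)] k2(2) w w' w_def w'_def by simp
  have lt: "1 < n" "n - 1 < n" "0 < n" using n3 by auto
  have bh0: "bt hh 0 = 1" using hh2(1) u0_def w_def bt_def by simp
  have bh1: "bt hh 1 = 0" using bt_blk[OF hh(1) lt(1), of b] hhw w_def u0_def by simp
  have bk0: "bt k 0 = 0" using k2(1) u0_def bt_def by simp
  have bk1: "bt k 1 = n - 1" using bt_blk[OF k(1) lt(1), of b] kw w_def w'_def by simp
  have bhl: "bt hh (n - 1) = nx n 1"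
  proof -
    have "bt hh 0 = nx n (bt hh (n - 1)) \<or> bt hh (n - 1) = nx n (bt hh 0)"
      using bt_adj[OF hh(1) lt(2)] nx_last by auto
    moreover have "bt hh 0 = nx n (bt hh (n - 1)) \<Longrightarrow> False"
    proof -
      assume "bt hh 0 = nx n (bt hh (n - 1))"
      then have "nx n 0 = nx n (bt hh (n - 1))" using bh0 nx0 by simp
      then have "bt hh (n - 1) = 0" using nx_inj[OF lt(3) bt_lt[OF hh(1) lt(2)]] by simp
      then have "bt hh (n - 1) = bt hh 1" using bh1 by simp
      then have "n - 1 = 1" using bt_inj[OF hh(1) lt(2,1)] by simp
      then show False using n3 by simp
    qed
    ultimately show ?thesis using bh0 by auto
  qed
  define g where "g = hh \<circ> k"
  have g: "g \<in> G" using comp_G[OF hh(1) k(1)] g_def by simp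
  have bg: "\<forall>j<n. bt g j = bt hh (bt k j)" using bt_comp[OF k(1) hh(1)] g_def by simp
  have "\<forall>j<n. bt g j = (j + 1) mod n"
  proof (rule rot[OF n3])
    show "\<forall>j<n. bt g j < n" using bt_lt g by blast
    show "\<forall>i<n. \<forall>j<n. bt g i = bt g j \<longrightarrow> i = j" using bt_inj g by blast
    show "\<forall>j<n. bt g (nx n j) = nx n (bt g j) \<or> bt g j = nx n (bt g (nx n j))" using bt_adj g by blast
    show "1 < n" using lt(1) .
    show "bt g 0 = 1" using bg bk0 bh0 lt by simp
    show "bt g 1 = nx n 1" using bg bk1 bhl lt by simp
  qed
  then show ?thesis using g by (auto simp: nx_def)
qed

lemma TT_shift: assumes S: "S \<in> TT" shows "nx n ` S \<in> TT"
proof -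
  obtain g where g: "g \<in> G" "\<forall>j<n. bt g j = nx n j" using TT_rotg by blast
  have Sn: "S \<subseteq> {..<n}" and fS: "flipN n S \<in> G" using S TT_def by auto
  define S' where "S' = nx n ` S"
  have S'n: "S' \<subseteq> {..<n}" using S'_def nx_lt[OF n0] by auto
  have C: "g \<circ> flipN n S = flipN n S' \<circ> g"
  proof
    fix x :: "nat \<times> bool"
    obtain j c where x: "x = (j,c)" by (cases x)
    show "(g \<circ> flipN n S) x = (flipN n S' \<circ> g) x"
    proof (cases "j < n")
      case False
      then have "x \<notin> V" using x V_iff by simp
      then show ?thesis using G_out[OF g(1)] x False by (simp add: flipN_app)
    next
      case True
      have V2: "(j,False) \<in> V" "(j,True) \<in> V" using True V_iff by auto
      have d: "g (j,False) \<noteq> g (j,True)" using G_inj[OF g(1) V2] by blast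
      have f: "g (j,False) = (nx n j, snd (g (j,False)))" "g (j,True) = (nx n j, snd (g (j,True)))"
        using bt_blk[OF g(1) True, of False] bt_blk[OF g(1) True, of True] g(2) True
        by (metis prod.collapse)+
      have sd: "snd (g (j,False)) \<noteq> snd (g (j,True))" using d f by metis
      have mem: "nx n j \<in> S' \<longleftrightarrow> j \<in> S"
        using S'_def nx_inj[OF True] Sn True by blast
      have lt: "nx n j < n" using nx_lt[OF n0] .
      define p where "p = snd (g (j,False))"
      have gb: "g (j,b) = (nx n j, if b then \<not> p else p)" for b
        using f sd p_def by (cases b) auto
      show ?thesis
      proof (cases "j \<in> S")
        case True
        then show ?thesis using x gb mem lt \<open>j < n\<close> by (simp add: flipN_app)
      next
        case False
        then show ?thesis using x gb mem lt \<open>j < n\<close> by (simp add: flipN_app)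
      qed
    qed
  qed
  have "act (flipN n S') ` F = F"
  proof -
    have "act (flipN n S') ` F = act (flipN n S') ` (act g ` F)" using G_Fimg[OF g(1)] by simp
    also have "\<dots> = act (flipN n S' \<circ> g) ` F" by (auto simp: act_def image_comp)
    also have "\<dots> = act (g \<circ> flipN n S) ` F" using C by simp
    also have "\<dots> = act g ` (act (flipN n S) ` F)" by (auto simp: act_def image_comp)
    also have "\<dots> = F" using G_Fimg[OF g(1)] G_Fimg[OF fS] by simp
    finally show ?thesis .
  qed
  then have F4: "(\<lambda>f. (\<lambda>e. flipN n S' ` e) ` f) ` F = F" unfolding act_def .
  have "flipN n S' \<in> G" unfolding map_aut_def mem_Collect_eq
    using flip_basic(1)[of S'] flip_basic(2)[of S'] flip_basic(3)[of S'] F4 by (intro conjI)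
  then show ?thesis using S'n S'_def TT_def by simp
qed


lemma nx_small: "j + 1 < n \<Longrightarrow> nx n j = j + 1" by (simp add: nx_def)

definition pr :: "nat \<Rightarrow> nat" where "pr j = (if j = 0 then n - 1 else j - 1)"

lemma sh_mem: assumes "S \<subseteq> {..<n}" "j < n" shows "j \<in> nx n ` S \<longleftrightarrow> pr j \<in> S"
proof
  assume "j \<in> nx n ` S"
  then obtain i where i: "i \<in> S" "j = nx n i" by blast
  have "i < n" using i assms by auto
  then have "pr j = i" using i n3 by (auto simp: pr_def nx_alt)
  then show "pr j \<in> S" using i by simp
next
  assume "pr j \<in> S"
  moreover have "nx n (pr j) = j" using assms(2) n3 by (auto simp: pr_def nx_alt)
  ultimately show "j \<in> nx n ` S" by (metis imageI)
qed

lemma sh_mem2: assumes "S \<subseteq> {..<n}" "j < n" shows "nx n j \<in> nx n ` S \<longleftrightarrow> j \<in> S"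
  using assms nx_inj[OF assms(2)] by auto

lemma sh_inj: assumes "S \<subseteq> {..<n}" "S' \<subseteq> {..<n}" "nx n ` S = nx n ` S'" shows "S = S'"
proof -
  have "j \<in> S \<longleftrightarrow> j \<in> S'" for j
  proof (cases "j < n")
    case True then show ?thesis using sh_mem2[OF assms(1) True] sh_mem2[OF assms(2) True] assms(3) by simp
  next
    case False then show ?thesis using assms(1,2) by auto
  qed
  then show ?thesis by blast
qed

lemma TT_sub: "S \<in> TT \<Longrightarrow> S \<subseteq> {..<n}" by (simp add: TT_def)

lemma final:
  "(TT = {{}, {j. j < n \<and> j mod 3 \<noteq> 0}, {j. j < n \<and> j mod 3 \<noteq> 1}, {j. j < n \<and> j mod 3 \<noteq> 2}} \<and> 3 dvd n)
   \<or> (TT = {{}, {j. j < n \<and> odd j}, {j. j < n \<and> even j}, {..<n}} \<and> 2 dvd n)"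
proof -
  obtain A where A: "A \<in> TT" "0 \<notin> A" "1 \<in> A" "n - 1 \<in> A" using TT_A by blast
  have An: "A \<subseteq> {..<n}" using TT_sub A by simp
  have lt: "0 < n" "1 < n" "n - 1 < n" using n3 by auto
  define Y where "Y = nx n ` A"
  define Z where "Z = (A - Y) \<union> (Y - A)"
  have YT: "Y \<in> TT" using TT_shift A Y_def by simp
  have ZT: "Z \<in> TT" using TT_diff A YT Z_def by simp
  have Yn: "Y \<subseteq> {..<n}" using TT_sub YT by simp
  have Zn: "Z \<subseteq> {..<n}" using TT_sub ZT by simp
  have Y0: "0 \<in> Y" using sh_mem2[OF An lt(3)] A nx_last Y_def by simp
  have U: "W = A" if W: "W \<in> TT" "W \<noteq> {}" "0 \<notin> W" for W
  proof -
    have "1 \<in> W"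
    proof (rule ccontr)
      assume "1 \<notin> W" then have "W = {}" using TT_B[OF W(1) lt(1) W(3)] nx0 by simp
      then show False using W by simp
    qed
    moreover have "n - 1 \<in> W"
    proof (rule ccontr)
      assume "n - 1 \<notin> W" then have "W = {}" using TT_B[OF W(1) lt(3)] nx_last W(3) by simp
      then show False using W by simp
    qed
    ultimately have "0 \<notin> (W - A) \<union> (A - W)" "nx n 0 \<notin> (W - A) \<union> (A - W)" using A W nx0 by auto
    then have "(W - A) \<union> (A - W) = {}" using TT_B[OF TT_diff[OF W(1) A(1)] lt(1)] by simp
    then show ?thesis by blast
  qed
  have W4: "W \<in> {{}, A, Y, Z}" if W: "W \<in> TT" for W
  proof (cases "W = {}")
    case True then show ?thesis by simp
  next
    case False
    show ?thesis
    proof (cases "0 \<in> W")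
      case False then show ?thesis using U W \<open>W \<noteq> {}\<close> by blast
    next
      case True
      define D where "D = (W - Y) \<union> (Y - W)"
      have DT: "D \<in> TT" using TT_diff W YT D_def by simp
      have "0 \<notin> D" using True Y0 D_def by simp
      then have "D = {} \<or> D = A" using U DT by blast
      then show ?thesis
      proof
        assume "D = {}" then have "W = Y" using D_def by (auto simp: set_eq_iff)
        then show ?thesis by simp
      next
        assume "D = A" then have "W = Z" using D_def Z_def by (auto simp: set_eq_iff)
        then show ?thesis by simp
      qed
    qed
  qed
  have TTeq: "TT = {{}, A, Y, Z}" using W4 TT_empty A(1) YT ZT by blast
  have XY: "A \<noteq> Y" using A(2) Y0 by blast
  have Yne: "Y \<noteq> {}" using Y0 by blast
  have Zne: "Z \<noteq> {}" using XY Z_def by (auto simp: set_eq_iff)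
  have shY: "nx n ` Y \<in> TT" using TT_shift YT by simp
  have shYne: "nx n ` Y \<noteq> {}" using Yne by simp
  have shYY: "nx n ` Y \<noteq> Y"
  proof
    assume "nx n ` Y = Y" then have "nx n ` Y = nx n ` A" using Y_def by simp
    then have "Y = A" by (rule sh_inj[OF Yn An])
    then show False using XY by simp
  qed
  have "nx n ` Y = A \<or> nx n ` Y = Z" using shY[unfolded TTeq] shYne shYY by simp
  then show ?thesis
  proof
    assume P: "nx n ` Y = A"
    have P2: "j \<in> A \<longleftrightarrow> nx n (nx n j) \<in> A" if j: "j < n" for j
    proof -
      have "j \<in> A \<longleftrightarrow> nx n j \<in> Y" using sh_mem2[OF An j] Y_def by simp
      also have "\<dots> \<longleftrightarrow> nx n (nx n j) \<in> nx n ` Y" using sh_mem2[OF Yn nx_lt[OF lt(1)]] by simp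
      finally show ?thesis using P by simp
    qed
    have Aodd: "\<forall>j<n. j \<in> A \<longleftrightarrow> odd j"
    proof (intro allI)
      fix j show "j < n \<longrightarrow> (j \<in> A \<longleftrightarrow> odd j)"
      proof (induction j rule: less_induct)
        case (less j)
        show ?case
        proof
          assume j: "j < n"
          show "j \<in> A \<longleftrightarrow> odd j"
          proof (cases "j < 2")
            case True then show ?thesis using A by (cases j) auto
          next
            case False
            define i where "i = j - 2"
            have i: "i < n" "j = i + 2" "i < j" using i_def j False by auto
            have "nx n i = i + 1" "nx n (i + 1) = i + 2" using i j by (simp_all add: nx_small)
            then have "nx n (nx n i) = j" using i by simp
            then have "j \<in> A \<longleftrightarrow> i \<in> A" using P2[OF i(1)] by simp
            also have "\<dots> \<longleftrightarrow> odd i" using less i by simp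
            finally show ?thesis using i by simp
          qed
        qed
      qed
    qed
    have ev: "even n"
    proof (rule ccontr)
      assume "odd n" then have "even (n - 1)" using n3 by simp
      then show False using Aodd A(4) lt(3) by simp
    qed
    have AY: "A = {j. j < n \<and> odd j}"
    proof (rule set_eqI)
      fix j show "j \<in> A \<longleftrightarrow> j \<in> {j. j < n \<and> odd j}"
      proof (cases "j < n")
        case True then show ?thesis using Aodd by simp
      next
        case False then show ?thesis using An by auto
      qed
    qed
    have YY: "Y = {j. j < n \<and> even j}"
    proof -
      have "j \<in> Y \<longleftrightarrow> j < n \<and> even j" for j
      proof (cases "j < n")
        case True
        have "j \<in> Y \<longleftrightarrow> pr j \<in> A" using sh_mem[OF An True] Y_def by simp
        also have "\<dots> \<longleftrightarrow> odd (pr j)" using Aodd True by (simp add: pr_def)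
        also have "\<dots> \<longleftrightarrow> even j"
        proof (cases "j = 0")
          case True then show ?thesis using ev n3 by (simp add: pr_def)
        next
          case False then show ?thesis by (simp add: pr_def; presburger)
        qed
        finally show ?thesis using True by simp
      next
        case False then show ?thesis using Yn by auto
      qed
      then show ?thesis by blast
    qed
    have ZZ: "Z = {..<n}"
    proof (rule set_eqI)
      fix j :: nat show "j \<in> Z \<longleftrightarrow> j \<in> {..<n}" using AY YY Z_def by (cases "odd j") auto
    qed
    have "TT = {{}, {j. j < n \<and> odd j}, {j. j < n \<and> even j}, {..<n}}" using TTeq AY YY ZZ by simp
    then show ?thesis using ev by simp
  next
    assume P: "nx n ` Y = Z"
    have shZ: "nx n ` Z \<in> TT" using TT_shift ZT by simp
    have "nx n ` Z \<noteq> {}" using Zne by simp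
    moreover have "nx n ` Z \<noteq> Y"
    proof
      assume "nx n ` Z = Y" then have "nx n ` Z = nx n ` A" using Y_def by simp
      then have "Z = A" by (rule sh_inj[OF Zn An])
      then have "(A - Y) \<union> (Y - A) = A" unfolding Z_def .
      then have "Y = {}" by blast
      then show False using Yne by simp
    qed
    moreover have "nx n ` Z \<noteq> Z"
    proof
      assume a: "nx n ` Z = Z"
      have "nx n ` Z = nx n ` Y" unfolding P using a .
      then have "Z = Y" by (rule sh_inj[OF Zn Yn])
      then have "(A - Y) \<union> (Y - A) = Y" unfolding Z_def .
      then have "A = {}" by blast
      then show False using A by simp
    qed
    ultimately have P': "nx n ` Z = A" using shZ[unfolded TTeq] by simp
    have P3: "j \<in> A \<longleftrightarrow> nx n (nx n (nx n j)) \<in> A" if j: "j < n" for j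
    proof -
      have l1: "nx n j < n" "nx n (nx n j) < n" using nx_lt[OF lt(1)] by auto
      have "j \<in> A \<longleftrightarrow> nx n j \<in> Y" using sh_mem2[OF An j] Y_def by simp
      also have "\<dots> \<longleftrightarrow> nx n (nx n j) \<in> Z" using sh_mem2[OF Yn l1(1)] P by simp
      also have "\<dots> \<longleftrightarrow> nx n (nx n (nx n j)) \<in> A" using sh_mem2[OF Zn l1(2)] P' by simp
      finally show ?thesis .
    qed
    have A2: "2 \<in> A"
    proof (cases "n = 3")
      case True then show ?thesis using A(4) by simp
    next
      case False
      then have n4': "4 \<le> n" using n3 by simp
      have "nx n (nx n (nx n 0)) = 3" using n4' by (simp add: nx_def)
      then have "3 \<notin> A" using P3[OF lt(1)] A(2) by simp
      moreover have "nx n 2 = 3" using n4' by (simp add: nx_def)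
      ultimately have "2 \<notin> A \<Longrightarrow> A = {}" using TT_B[OF A(1), of 2] n4' by simp
      then show ?thesis using A(3) by blast
    qed
    have A3: "\<forall>j<n. j \<in> A \<longleftrightarrow> j mod 3 \<noteq> 0"
    proof (intro allI)
      fix j show "j < n \<longrightarrow> (j \<in> A \<longleftrightarrow> j mod 3 \<noteq> 0)"
      proof (induction j rule: less_induct)
        case (less j)
        show ?case
        proof
          assume j: "j < n"
          show "j \<in> A \<longleftrightarrow> j mod 3 \<noteq> 0"
          proof (cases "j < 3")
            case True
            then have "j = 0 \<or> j = 1 \<or> j = 2" by auto
            then show ?thesis using A A2 by auto
          next
            case False
            define i where "i = j - 3"
            have i: "i < n" "j = i + 3" "i < j" using i_def j False by auto
            have "nx n i = i + 1" "nx n (i + 1) = i + 2" "nx n (i + 2) = i + 3" using i j by (simp_all add: nx_small)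
            then have "nx n (nx n (nx n i)) = j" using i by simp
            then have "j \<in> A \<longleftrightarrow> i \<in> A" using P3[OF i(1)] by simp
            also have "\<dots> \<longleftrightarrow> i mod 3 \<noteq> 0" using less i by simp
            finally show ?thesis using i by simp
          qed
        qed
      qed
    qed
    have d3: "3 dvd n"
    proof (rule ccontr)
      assume nd: "\<not> 3 dvd n"
      then have "n mod 3 = 1 \<or> n mod 3 = 2" by presburger
      then show False
      proof
        assume "n mod 3 = 1"
        then have "(n - 1) mod 3 = 0" using n3 by presburger
        then show False using A3 A(4) lt(3) by simp
      next
        assume m: "n mod 3 = 2"
        then have "(n - 2) mod 3 = 0" using n3 by presburger
        then have "n - 2 \<notin> A" using A3 n3 by simp
        moreover have "nx n (nx n (nx n (n - 2))) = 1"
        proof -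
          have "nx n (n - 2) = n - 1" using n3 by (simp add: nx_def)
          then show ?thesis using nx_last nx0 by simp
        qed
        ultimately show False using P3[of "n - 2"] A(3) n3 by simp
      qed
    qed
    have AX: "A = {j. j < n \<and> j mod 3 \<noteq> 0}"
    proof (rule set_eqI)
      fix j show "j \<in> A \<longleftrightarrow> j \<in> {j. j < n \<and> j mod 3 \<noteq> 0}"
      proof (cases "j < n")
        case True then show ?thesis using A3 by simp
      next
        case False then show ?thesis using An by auto
      qed
    qed
    have YY: "Y = {j. j < n \<and> j mod 3 \<noteq> 1}"
    proof -
      have "j \<in> Y \<longleftrightarrow> j < n \<and> j mod 3 \<noteq> 1" for j
      proof (cases "j < n")
        case True
        have Yj: "j \<in> Y \<longleftrightarrow> pr j \<in> A" using sh_mem[OF An True] Y_def by simp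
        show ?thesis
        proof (cases "j = 0")
          case True
          then have "pr j = n - 1" by (simp add: pr_def)
          then show ?thesis using Yj A(4) True lt by simp
        next
          case False
          then have p: "pr j = j - 1" "j - 1 < n" using \<open>j < n\<close> by (auto simp: pr_def)
          have m: "((j - 1) mod 3 \<noteq> 0) = (j mod 3 \<noteq> 1)" using False by presburger
          have "j \<in> Y \<longleftrightarrow> (j - 1) mod 3 \<noteq> 0" using Yj p A3 by simp
          then show ?thesis using m \<open>j < n\<close> by simp
        qed
      next
        case False then show ?thesis using Yn by auto
      qed
      then show ?thesis by blast
    qed
    have ZZ: "Z = {j. j < n \<and> j mod 3 \<noteq> 2}"
    proof (rule set_eqI)
      fix j :: nat
      have "j \<in> Z \<longleftrightarrow> (j \<in> A) \<noteq> (j \<in> Y)" using Z_def by blast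
      also have "\<dots> \<longleftrightarrow> j < n \<and> (j mod 3 \<noteq> 0) \<noteq> (j mod 3 \<noteq> 1)" using AX YY by auto
      also have "\<dots> \<longleftrightarrow> j < n \<and> j mod 3 \<noteq> 2" by presburger
      finally show "j \<in> Z \<longleftrightarrow> j \<in> {j. j < n \<and> j mod 3 \<noteq> 2}" by simp
    qed
    have "TT = {{}, {j. j < n \<and> j mod 3 \<noteq> 0}, {j. j < n \<and> j mod 3 \<noteq> 1}, {j. j < n \<and> j mod 3 \<noteq> 2}}"
      using TTeq AX YY ZZ by simp
    then show ?thesis using d3 by simp
  qed
qed

end


theorem lemma3p1:
  fixes n :: nat and F :: "(nat \<times> bool) set set set"
  assumes "n \<ge> 3" and "n \<noteq> 4"
    and "polytopal_map (RV n) (RE n) F"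
    and "class_2_01 (RV n) (RE n) F"
  shows "((groupN n \<inter> map_aut (RV n) (RE n) F =
            flipN n ` {{}, {j. j < n \<and> j mod 3 \<noteq> 0}, {j. j < n \<and> j mod 3 \<noteq> 1},
                        {j. j < n \<and> j mod 3 \<noteq> 2}} \<and> 3 dvd n)
       \<or> (groupN n \<inter> map_aut (RV n) (RE n) F =
            flipN n ` {{}, {j. j < n \<and> odd j}, {j. j < n \<and> even j}, {..<n}} \<and> 2 dvd n))
       \<and> gcd n 6 \<noteq> 1"
proof -
  interpret rw n F using assms by (unfold_locales)
  have eq: "groupN n \<inter> map_aut (RV n) (RE n) F = flipN n ` TT"
    by (auto simp: groupN_def TT_def)
  have g3: "gcd n 6 \<noteq> 1" if "3 dvd n"
  proof
    assume "gcd n 6 = 1"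
    moreover have "3 dvd gcd n 6" using that by simp
    ultimately show False by simp
  qed
  have g2: "gcd n 6 \<noteq> 1" if "2 dvd n"
  proof
    assume "gcd n 6 = 1"
    moreover have "2 dvd gcd n 6" using that by simp
    ultimately show False by simp
  qed
  from final show ?thesis
  proof
    assume h: "TT = {{}, {j. j < n \<and> j mod 3 \<noteq> 0}, {j. j < n \<and> j mod 3 \<noteq> 1}, {j. j < n \<and> j mod 3 \<noteq> 2}} \<and> 3 dvd n"
    then show ?thesis using eq g3 by simp
  next
    assume h: "TT = {{}, {j. j < n \<and> odd j}, {j. j < n \<and> even j}, {..<n}} \<and> 2 dvd n"
    then show ?thesis using eq g2 by simp
  qed
qed

end
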